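(* Let $L$ be an $R_0$-algebra and $k\in[0,1)$. Let $\{F_t\mid t\in\Lambda\}$, where $\Lambda\subseteq(0,\tfrac{1-k}{2}]$, be a collection of fated filters of $L$ such that (i) $L=\bigcup_{t\in\Lambda}F_t$, and (ii) for all $s,t\in\Lambda$, $s<t$ if and only if $F_t\subset F_s$. Then the fuzzy subset $\mu$ of $L$ defined by $\mu(x)=\sup\{t\in\Lambda\mid x\in F_t\}$ for all $x\in L$ is an $(\in,\in\vee q_k)$-fuzzy fated filter of $L$.
   Context: An $R_0$-algebra is a bounded distributive lattice $(L,\wedge,\vee,0,1)$ with an order-reversing involution $\neg$ and a binary operation $\to$ such that for all $x,y,z\in L$: $x\to y=\neg y\to\neg x$; $1\to x=x$; $(y\to z)\wedge((x\to y)\to(x\to z))=y\to z$; $x\to(y\to z)=y\to(x\to z)$; $x\to(y\vee z)=(x\to y)\vee(x\to z)$; $(x\to y)\vee((x\to y)\to(\neg x\vee y))=1$. A fated filter of $L$ is a nonempty subset $A\subseteq L$ with $1\in A$ such that for all $x,y\in L$ and $a\in A$, $a\to((x\to y)\to x)\in A$ implies $x\in A$. For $x\in L$, $t\in(0,1]$ and a fuzzy subset $\mu:L\to[0,1]$: $x_t\in\mu$ iff $\mu(x)\ge t$; $x_t\,q_k\,\mu$ iff $\mu(x)+t+k>1$; $x_t\in\vee q_k\,\mu$ iff $x_t\in\mu$ or $x_t\,q_k\,\mu$. $\mu$ is an $(\in,\in\vee q_k)$-fuzzy fated filter of $L$ if (1) for all $x\in L$, $t\in(0,1]$: $x_t\in\mu\Rightarrow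 1_t\in\vee q_k\,\mu$; and (2) for all $x,a,y\in L$, $t,s\in(0,1]$: if $(a\to((x\to y)\to x))_t\in\mu$ and $a_s\in\mu$ then $x_{\min\{t,s\}}\in\vee q_k\,\mu$. *)

theory Defs
  imports Main "HOL.Real"
begin

definition R0_algebra ::
  "('a::{distrib_lattice,bounded_lattice} \<Rightarrow> 'a) \<Rightarrow> ('a \<Rightarrow> 'a \<Rightarrow> 'a) \<Rightarrow> bool" where
  "R0_algebra neg imp \<longleftrightarrow>
     (\<forall>x. neg (neg x) = x) \<and>
     (\<forall>x y. x \<le> y \<longrightarrow> neg y \<le> neg x) \<and>
     (\<forall>x y. imp x y = imp (neg y) (neg x)) \<and>
     (\<forall>x. imp top x = x) \<and>
     (\<forall>x y z. inf (imp y z) (imp (imp x y) (imp x z)) = imp y z) \<and>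
     (\<forall>x y z. imp x (imp y z) = imp y (imp x z)) \<and>
     (\<forall>x y z. imp x (sup y z) = sup (imp x y) (imp x z)) \<and>
     (\<forall>x y. sup (imp x y) (imp (imp x y) (sup (neg x) y)) = top)"

definition fated_filter :: "('a::bounded_lattice \<Rightarrow> 'a \<Rightarrow> 'a) \<Rightarrow> 'a set \<Rightarrow> bool" where
  "fated_filter imp A \<longleftrightarrow> A \<noteq> {} \<and> top \<in> A \<and>
     (\<forall>x y a. a \<in> A \<longrightarrow> imp a (imp (imp x y) x) \<in> A \<longrightarrow> x \<in> A)"

text \<open>Fuzzy point relations: \<open>x_t \<in> \<mu>\<close> and \<open>x_t \<in>\<or>q_k \<mu>\<close>.\<close>
definition fin :: "('a \<Rightarrow> real) \<Rightarrow> 'a \<Rightarrow> real \<Rightarrow> bool" where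
  "fin \<mu> x t \<longleftrightarrow> \<mu> x \<ge> t"

definition fq :: "real \<Rightarrow> ('a \<Rightarrow> real) \<Rightarrow> 'a \<Rightarrow> real \<Rightarrow> bool" where
  "fq k \<mu> x t \<longleftrightarrow> \<mu> x + t + k > 1"

definition fin_or_q :: "real \<Rightarrow> ('a \<Rightarrow> real) \<Rightarrow> 'a \<Rightarrow> real \<Rightarrow> bool" where
  "fin_or_q k \<mu> x t \<longleftrightarrow> fin \<mu> x t \<or> fq k \<mu> x t"

definition fuzzy_fated_filter_k ::
  "real \<Rightarrow> ('a::bounded_lattice \<Rightarrow> 'a \<Rightarrow> 'a) \<Rightarrow> ('a \<Rightarrow> real) \<Rightarrow> bool" where
  "fuzzy_fated_filter_k k imp \<mu> \<longleftrightarrow>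
     (\<forall>x. 0 \<le> \<mu> x \<and> \<mu> x \<le> 1) \<and>
     (\<forall>x t. 0 < t \<and> t \<le> 1 \<longrightarrow> fin \<mu> x t \<longrightarrow> fin_or_q k \<mu> top t) \<and>
     (\<forall>x a y t s. 0 < t \<and> t \<le> 1 \<and> 0 < s \<and> s \<le> 1 \<longrightarrow>
        fin \<mu> (imp a (imp (imp x y) x)) t \<longrightarrow> fin \<mu> a s \<longrightarrow>
        fin_or_q k \<mu> x (min t s))"

end

theory Submission
  imports Defs
begin

theorem theorem3p28:
  fixes neg :: "'a::{distrib_lattice,bounded_lattice} \<Rightarrow> 'a"
    and imp :: "'a \<Rightarrow> 'a \<Rightarrow> 'a"
    and k :: real and \<Lambda> :: "real set" and F :: "real \<Rightarrow> 'a set"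
  assumes "R0_algebra neg imp"
    and "0 \<le> k" and "k < 1"
    and "\<Lambda> \<subseteq> {0<..(1 - k) / 2}"
    and "\<forall>t\<in>\<Lambda>. fated_filter imp (F t)"
    and "(UNIV :: 'a set) = (\<Union>t\<in>\<Lambda>. F t)"
    and "\<forall>s\<in>\<Lambda>. \<forall>t\<in>\<Lambda>. s < t \<longleftrightarrow> F t \<subset> F s"
  shows "fuzzy_fated_filter_k k imp (\<lambda>x. Sup {t \<in> \<Lambda>. x \<in> F t})"
proof -
  define \<mu> where "\<mu> = (\<lambda>x. Sup {t \<in> \<Lambda>. x \<in> F t})"
  have ne: "{t \<in> \<Lambda>. x \<in> F t} \<noteq> {}" for x
    using assms(6) by (metis (mono_tags, lifting) UNIV_I UN_E empty_iff mem_Collect_eq)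
  have bdd: "bdd_above {t \<in> \<Lambda>. x \<in> F t}" for x
    using assms(4) by (intro bdd_aboveI[where M="(1-k)/2"]) auto
  have up: "t \<in> \<Lambda> \<Longrightarrow> x \<in> F t \<Longrightarrow> t \<le> \<mu> x" for t x
    unfolding \<mu>_def by (rule cSup_upper) (auto intro: bdd)
  have pos: "0 \<le> \<mu> x" for x
  proof -
    obtain t where "t \<in> \<Lambda>" "x \<in> F t" using ne[of x] by auto
    then show ?thesis using up[of t x] assms(4) by force
  qed
  have le1: "\<mu> x \<le> 1" for x
    unfolding \<mu>_def
  proof (intro cSup_least[OF ne])
    fix t assume "t \<in> {t \<in> \<Lambda>. x \<in> F t}"
    hence "t \<le> (1-k)/2" using assms(4) by auto
    thus "t \<le> 1" using assms(2) by (simp add: field_simps)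
  qed
  have topin: "t \<in> \<Lambda> \<Longrightarrow> top \<in> F t" for t
    using assms(5) unfolding fated_filter_def by auto
  have topmax: "\<mu> x \<le> \<mu> top" for x
  proof -
    have "Sup {t \<in> \<Lambda>. x \<in> F t} \<le> \<mu> top" by (rule cSup_least[OF ne]) (auto intro: up topin)
    thus ?thesis by (simp add: \<mu>_def)
  qed
  have less: "y < \<mu> x \<Longrightarrow> \<exists>u\<in>\<Lambda>. x \<in> F u \<and> y < u" for x y
    unfolding \<mu>_def using less_cSup_iff[OF ne bdd] by auto
  have mono: "u \<in> \<Lambda> \<Longrightarrow> v \<in> \<Lambda> \<Longrightarrow> u \<le> v \<Longrightarrow> F v \<subseteq> F u" for u v
    proof (cases "u = v")
    case False
    assume "u \<in> \<Lambda>" "v \<in> \<Lambda>" "u \<le> v"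
    with False have "u < v" by simp
    thus ?thesis using assms(7) \<open>u \<in> \<Lambda>\<close> \<open>v \<in> \<Lambda>\<close> by blast
  qed simp
  have key: "min (\<mu> (imp a (imp (imp x y) x))) (\<mu> a) \<le> \<mu> x" for a x y
  proof (rule ccontr)
    let ?b = "imp a (imp (imp x y) x)"
    assume "\<not> ?thesis"
    hence "\<mu> x < \<mu> ?b" "\<mu> x < \<mu> a" by auto
    then obtain u v where u: "u \<in> \<Lambda>" "?b \<in> F u" "\<mu> x < u"
      and v: "v \<in> \<Lambda>" "a \<in> F v" "\<mu> x < v" using less by meson
    define w where "w = min u v"
    have w: "w \<in> \<Lambda>" "\<mu> x < w" using u v by (auto simp: w_def min_def)
    have "?b \<in> F w" "a \<in> F w" using u v mono[of u v] mono[of v u]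
      by (auto simp: w_def min_def)
    hence "x \<in> F w" using assms(5) w(1) unfolding fated_filter_def by blast
    thus False using up[OF w(1), of x] w(2) by linarith
  qed
  show ?thesis
    unfolding fuzzy_fated_filter_k_def \<mu>_def[symmetric] fin_or_q_def fin_def
  proof (intro conjI allI impI)
    fix x show "0 \<le> \<mu> x" by (rule pos)
  next
    fix x show "\<mu> x \<le> 1" by (rule le1)
  next
    fix x :: 'a and t :: real
    assume "t \<le> \<mu> x" thus "t \<le> \<mu> top \<or> fq k \<mu> top t" using topmax[of x] by auto
  next
    fix x a y :: 'a and t s :: real
    assume "t \<le> \<mu> (imp a (imp (imp x y) x))" "s \<le> \<mu> a"
    thus "min t s \<le> \<mu> x \<or> fq k \<mu> x (min t s)" using key[of a x y] by auto
  qed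
qed

end
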